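(* Let $\mathcal{X}=\{a_1,\dots,a_n\}$, $\mathcal{Z}=\{b_1,\dots,b_m\}$ be finite and let $\mathcal{Y}=\{c_1,\dots,c_K\}$ be the set of distinct values of $h$. Let $A$ be the $n\times K$ matrix with $A(i,j)=Q(\{z: h(a_i,z)=c_j\})=P(Y_k=c_j\mid X_k=a_i)$, let $T$ be the $n\times n$ transition matrix of the state chain, and let $M=\begin{pmatrix}A & TA & \cdots & T^{n-1}A\end{pmatrix}$, an $n\times nK$ matrix. If $M$ has rank $n$, then the model is $n$ step observable. Furthermore, if $M$ does not have rank $n$, then appending further blocks $T^kA$ with $k\ge n$ to $M$ does not increase its rank.
   Context: Setting: finite state space $\mathcal{X}$, finite noise space $\mathcal{Z}$ with noise law $Q$ (a probability vector), measurement function $h:\mathcal{X}\times\mathcal{Z}\to\mathcal{Y}$. $\{X_k\}$ is a Markov chain with transition matrix $T$, $\{Z_k\}$ i.i.d. with law $Q$ independent of the states, and $Y_k=h(X_k,Z_k)$. For $N\in\mathbb{N}$ let $P(dy_{[1,N]}\mid X_1=x)$ be the conditional law of $(Y_1,\dots,Y_N)$ given $X_1=x$. The model is $N$ step observable if for every function $f:\mathcal{X}\to\mathbb{R}$ and $\epsilon>0$ there is $g:\mathcal{Y}^N\to\mathbb{R}$ with $\max_{x}\left|f(x)-\sum_{y_{[1,N]}}g(y_{[1,N]})P(y_{[1,N]}\mid X_1=x)\right|<\epsilon$. *)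

theory Defs
  imports "HOL-Analysis.Analysis"
begin

(* Hidden Markov model with finite state type 'x, finite noise type 'z,
   transition matrix T (T x x' = P(X_{k+1} = x' | X_k = x)), noise law Q,
   measurement function h, Y_k = h X_k Z_k. *)

definition stochastic_matrix :: "('x::finite \<Rightarrow> 'x \<Rightarrow> real) \<Rightarrow> bool" where
  "stochastic_matrix T \<longleftrightarrow> (\<forall>x x'. 0 \<le> T x x') \<and> (\<forall>x. (\<Sum>x'\<in>UNIV. T x x') = 1)"

definition prob_vector :: "('z::finite \<Rightarrow> real) \<Rightarrow> bool" where
  "prob_vector Q \<longleftrightarrow> (\<forall>z. 0 \<le> Q z) \<and> (\<Sum>z\<in>UNIV. Q z) = 1"

(* The observation space: the set of distinct values of h. *)
definition obs_space :: "('x \<Rightarrow> 'z \<Rightarrow> 'y) \<Rightarrow> 'y set" where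
  "obs_space h = {h x z | x z. True}"

(* Conditional law P(Y_1 = ys!0, ..., Y_N = ys!(N-1) | X_1 = x), N = length ys,
   obtained by summing over all state paths xs (starting at x) and noise
   sequences zs consistent with the observations. *)
definition cond_law ::
  "('x::finite \<Rightarrow> 'x \<Rightarrow> real) \<Rightarrow> ('z::finite \<Rightarrow> real) \<Rightarrow> ('x \<Rightarrow> 'z \<Rightarrow> 'y) \<Rightarrow> 'x \<Rightarrow> 'y list \<Rightarrow> real" where
  "cond_law T Q h x ys =
     (\<Sum>xs | length xs = length ys \<and> (ys \<noteq> [] \<longrightarrow> hd xs = x).
        \<Sum>zs | length zs = length ys \<and> (\<forall>i<length ys. h (xs ! i) (zs ! i) = ys ! i).
          (\<Prod>i<length ys - 1. T (xs ! i) (xs ! Suc i)) * (\<Prod>i<length ys. Q (zs ! i)))"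

(* N step observability *)
definition observable ::
  "('x::finite \<Rightarrow> 'x \<Rightarrow> real) \<Rightarrow> ('z::finite \<Rightarrow> real) \<Rightarrow> ('x \<Rightarrow> 'z \<Rightarrow> 'y) \<Rightarrow> nat \<Rightarrow> bool" where
  "observable T Q h N \<longleftrightarrow>
     (\<forall>f :: 'x \<Rightarrow> real. \<forall>\<epsilon>>0. \<exists>g :: 'y list \<Rightarrow> real.
        \<forall>x. \<bar>f x - (\<Sum>ys | length ys = N \<and> set ys \<subseteq> obs_space h. g ys * cond_law T Q h x ys)\<bar> < \<epsilon>)"

(* Column of the matrix A indexed by observation value y:
   A(x, y) = Q({z. h x z = y}) = P(Y_k = y | X_k = x). *)
definition A_col :: "('z::finite \<Rightarrow> real) \<Rightarrow> ('x::finite \<Rightarrow> 'z \<Rightarrow> 'y) \<Rightarrow> 'y \<Rightarrow> real ^ 'x" where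
  "A_col Q h y = (\<chi> x. \<Sum>z | h x z = y. Q z)"

definition trans_mat :: "('x::finite \<Rightarrow> 'x \<Rightarrow> real) \<Rightarrow> real ^ 'x ^ 'x" where
  "trans_mat T = (\<chi> i j. T i j)"

(* Columns of the block matrix (A  TA  ...  T^(k-1) A), i.e. of T^j A for j < k. *)
definition block_cols ::
  "('x::finite \<Rightarrow> 'x \<Rightarrow> real) \<Rightarrow> ('z::finite \<Rightarrow> real) \<Rightarrow> ('x \<Rightarrow> 'z \<Rightarrow> 'y) \<Rightarrow> nat \<Rightarrow> (real ^ 'x) set" where
  "block_cols T Q h k = {((*v) (trans_mat T) ^^ j) (A_col Q h y) | j y. j < k \<and> y \<in> obs_space h}"

(* rank of (A TA ... T^(k-1) A) = dimension of its column space *)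
definition block_rank ::
  "('x::finite \<Rightarrow> 'x \<Rightarrow> real) \<Rightarrow> ('z::finite \<Rightarrow> real) \<Rightarrow> ('x \<Rightarrow> 'z \<Rightarrow> 'y) \<Rightarrow> nat \<Rightarrow> nat" where
  "block_rank T Q h k = dim (block_cols T Q h k)"

end

theory Submission
  imports Defs
begin

definition Wq :: "('z::finite \<Rightarrow> real) \<Rightarrow> ('x \<Rightarrow> 'z \<Rightarrow> 'y) \<Rightarrow> 'x list \<Rightarrow> 'y list \<Rightarrow> real" where
  "Wq Q h xs ys = (\<Sum>zs | length zs = length ys \<and> (\<forall>i<length ys. h (xs ! i) (zs ! i) = ys ! i).
          (\<Prod>i<length ys. Q (zs ! i)))"

definition Ptr :: "('x \<Rightarrow> 'x \<Rightarrow> real) \<Rightarrow> 'x list \<Rightarrow> nat \<Rightarrow> real" where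
  "Ptr T xs n = (\<Prod>i<n - 1. T (xs ! i) (xs ! Suc i))"

lemma cond_law_alt:
  "cond_law T Q h x ys = (\<Sum>xs | length xs = length ys \<and> (ys \<noteq> [] \<longrightarrow> hd xs = x).
      Ptr T xs (length ys) * Wq Q h xs ys)"
  by (simp add: cond_law_def Ptr_def Wq_def sum_distrib_left)

lemma Wq_nil: "Wq Q h xs [] = 1"
  by (simp add: Wq_def)

lemma Wq_cons:
  "Wq Q h (x # xs) (y # ys) = (\<Sum>z | h x z = y. Q z) * Wq Q h xs ys"
proof -
  define S where "S = {zs. length zs = length ys \<and> (\<forall>i<length ys. h (xs ! i) (zs ! i) = ys ! i)}"
  have set: "{zs. length zs = length (y # ys) \<and> (\<forall>i<length (y # ys). h ((x # xs) ! i) (zs ! i) = (y # ys) ! i)}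
      = (\<lambda>(z, zs). z # zs) ` ({z. h x z = y} \<times> S)"
  proof (rule set_eqI, rule iffI)
    fix zs assume a: "zs \<in> {zs. length zs = length (y # ys) \<and> (\<forall>i<length (y # ys). h ((x # xs) ! i) (zs ! i) = (y # ys) ! i)}"
    then obtain z zs' where zs: "zs = z # zs'" by (cases zs) auto
    have "h x z = y" using a zs by force
    moreover have "zs' \<in> S" using a zs unfolding S_def by force
    ultimately show "zs \<in> (\<lambda>(z, zs). z # zs) ` ({z. h x z = y} \<times> S)" using zs by blast
  next
    fix zs assume "zs \<in> (\<lambda>(z, zs). z # zs) ` ({z. h x z = y} \<times> S)"
    then show "zs \<in> {zs. length zs = length (y # ys) \<and> (\<forall>i<length (y # ys). h ((x # xs) ! i) (zs ! i) = (y # ys) ! i)}"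
      unfolding S_def by (auto simp: less_Suc_eq_0_disj)
  qed
  have inj: "inj_on (\<lambda>(z, zs). z # zs) ({z. h x z = y} \<times> S)"
    by (auto simp: inj_on_def)
  have "Wq Q h (x # xs) (y # ys) = (\<Sum>p\<in>{z. h x z = y} \<times> S. (\<Prod>i<Suc (length ys). Q (((\<lambda>(z, zs). z # zs) p) ! i)))"
    unfolding Wq_def set by (simp add: sum.reindex[OF inj])
  also have "\<dots> = (\<Sum>p\<in>{z. h x z = y} \<times> S. Q (fst p) * (\<Prod>i<length ys. Q (snd p ! i)))"
    by (rule sum.cong) (auto simp del: prod.lessThan_Suc simp: prod.lessThan_Suc_shift)
  also have "\<dots> = (\<Sum>z\<in>{z. h x z = y}. \<Sum>zs\<in>S. Q z * (\<Prod>i<length ys. Q (zs ! i)))"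
    by (simp add: sum.cartesian_product case_prod_beta)
  also have "\<dots> = (\<Sum>z | h x z = y. Q z) * Wq Q h xs ys"
    unfolding Wq_def S_def by (simp add: sum_product)
  finally show ?thesis .
qed

lemma Ptr_cons:
  "Ptr T (x # xs) (Suc m) = (if m = 0 then 1 else T x (xs ! 0) * Ptr T xs m)"
proof (cases m)
  case 0 then show ?thesis by (simp add: Ptr_def)
next
  case (Suc m') then show ?thesis by (simp del: prod.lessThan_Suc add: Ptr_def prod.lessThan_Suc_shift)
qed

lemma cl_nil: "cond_law T Q h x [] = 1"
proof -
  have "{xs::'a list. length xs = 0} = {[]}"
    by auto
  then show ?thesis by (simp add: cond_law_def)
qed


lemma cl_cons:
  fixes T :: "'x::finite \<Rightarrow> 'x \<Rightarrow> real"
  assumes st: "stochastic_matrix T"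
  shows "cond_law T Q h x (y # ys) = (\<Sum>z | h x z = y. Q z) * (\<Sum>x'\<in>UNIV. T x x' * cond_law T Q h x' ys)"
proof -
  define m where "m = length ys"
  define a where "a = (\<Sum>z | h x z = y. Q z)"
  define L where "L = {xs::'x list. length xs = m}"
  have finL: "finite L" unfolding L_def by (rule finite_list_length)
  have set: "{xs. length xs = length (y # ys) \<and> (y # ys \<noteq> [] \<longrightarrow> hd xs = x)} = Cons x ` L"
  proof (rule set_eqI, rule iffI)
    fix xs assume a: "xs \<in> {xs. length xs = length (y # ys) \<and> (y # ys \<noteq> [] \<longrightarrow> hd xs = x)}"
    then obtain x0 xs' where "xs = x0 # xs'" by (cases xs) auto
    then show "xs \<in> Cons x ` L" using a unfolding L_def m_def by auto
  qed (auto simp: L_def m_def)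
  have "cond_law T Q h x (y # ys) = (\<Sum>xs'\<in>L. Ptr T (x # xs') (Suc m) * Wq Q h (x # xs') (y # ys))"
    unfolding cond_law_alt set by (simp add: sum.reindex m_def)
  also have "\<dots> = (\<Sum>xs'\<in>L. a * (Ptr T (x # xs') (Suc m) * Wq Q h xs' ys))"
    by (simp add: Wq_cons a_def mult_ac)
  also have "\<dots> = a * (\<Sum>xs'\<in>L. Ptr T (x # xs') (Suc m) * Wq Q h xs' ys)"
    by (simp add: sum_distrib_left)
  finally have eq1: "cond_law T Q h x (y # ys) = a * (\<Sum>xs'\<in>L. Ptr T (x # xs') (Suc m) * Wq Q h xs' ys)" .
  show ?thesis
  proof (cases "ys = []")
    case True
    then have "m = 0" "L = {[]}" unfolding m_def L_def by auto
    moreover have "(\<Sum>x'\<in>UNIV. T x x') = 1" using st by (simp add: stochastic_matrix_def)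
    ultimately show ?thesis using eq1 True by (simp add: a_def Ptr_def Wq_nil cl_nil)
  next
    case False
    then have m0: "m \<noteq> 0" unfolding m_def by simp
    have "(\<Sum>xs'\<in>L. Ptr T (x # xs') (Suc m) * Wq Q h xs' ys)
        = (\<Sum>xs'\<in>L. T x (xs' ! 0) * (Ptr T xs' m * Wq Q h xs' ys))"
      using m0 by (simp add: Ptr_cons mult.assoc)
    also have "\<dots> = (\<Sum>x'\<in>UNIV. \<Sum>xs'\<in>{xs'\<in>L. xs' ! 0 = x'}. T x (xs' ! 0) * (Ptr T xs' m * Wq Q h xs' ys))"
      by (rule sum.group[symmetric]) (auto simp: finL)
    also have "\<dots> = (\<Sum>x'\<in>UNIV. T x x' * cond_law T Q h x' ys)"
    proof (rule sum.cong[OF refl])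
      fix x' :: 'x
      have s: "{xs'\<in>L. xs' ! 0 = x'} = {xs. length xs = length ys \<and> (ys \<noteq> [] \<longrightarrow> hd xs = x')}"
        using m0 False unfolding L_def m_def by auto (metis hd_conv_nth length_0_conv)+
      show "(\<Sum>xs'\<in>{xs'\<in>L. xs' ! 0 = x'}. T x (xs' ! 0) * (Ptr T xs' m * Wq Q h xs' ys)) = T x x' * cond_law T Q h x' ys"
        unfolding cond_law_alt s[symmetric] by (simp add: sum_distrib_left m_def)
    qed
    finally show ?thesis using eq1 by (simp add: a_def)
  qed
qed


lemma finite_obs: "finite (obs_space (h :: 'x::finite \<Rightarrow> 'z::finite \<Rightarrow> 'y))"
proof -
  have "obs_space h = case_prod h ` UNIV" by (auto simp: obs_space_def)
  then show ?thesis by simp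
qed

lemma sum_A:
  fixes h :: "'x::finite \<Rightarrow> 'z::finite \<Rightarrow> 'y"
  assumes "prob_vector Q"
  shows "(\<Sum>y\<in>obs_space h. \<Sum>z | h x z = y. Q z) = 1"
proof -
  have "(\<Sum>y\<in>obs_space h. sum Q {z\<in>UNIV. h x z = y}) = sum Q UNIV"
    by (rule sum.group) (use finite_obs[of h] in \<open>auto simp: obs_space_def\<close>)
  then show ?thesis using assms by (simp add: prob_vector_def)
qed

lemma sum_lists_Suc:
  assumes "finite Ob"
  shows "(\<Sum>ys | length ys = Suc m \<and> set ys \<subseteq> Ob. F ys) = (\<Sum>y\<in>Ob. \<Sum>ys | length ys = m \<and> set ys \<subseteq> Ob. F (y # ys))"
proof -
  define S where "S = {ys. length ys = m \<and> set ys \<subseteq> Ob}"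
  have set: "{ys. length ys = Suc m \<and> set ys \<subseteq> Ob} = (\<lambda>(y, ys). y # ys) ` (Ob \<times> S)"
  proof (rule set_eqI, rule iffI)
    fix ys assume a: "ys \<in> {ys. length ys = Suc m \<and> set ys \<subseteq> Ob}"
    then obtain y ys' where "ys = y # ys'" by (cases ys) auto
    then show "ys \<in> (\<lambda>(y, ys). y # ys) ` (Ob \<times> S)" using a unfolding S_def by auto
  qed (auto simp: S_def)
  have inj: "inj_on (\<lambda>(y, ys). y # ys) (Ob \<times> S)" by (auto simp: inj_on_def)
  show ?thesis unfolding set S_def[symmetric] sum.reindex[OF inj]
    by (simp add: sum.cartesian_product comp_def split_def)
qed

lemma total:
  fixes T :: "'x::finite \<Rightarrow> 'x \<Rightarrow> real" and Q :: "'z::finite \<Rightarrow> real" and h :: "'x \<Rightarrow> 'z \<Rightarrow> 'y"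
  assumes st: "stochastic_matrix T" and pv: "prob_vector Q"
  shows "(\<Sum>ys | length ys = m \<and> set ys \<subseteq> obs_space h. cond_law T Q h x ys) = 1"
proof (induction m arbitrary: x)
  case 0
  have "{ys::'y list. length ys = 0 \<and> set ys \<subseteq> obs_space h} = {[]}" by auto
  then show ?case by (simp add: cl_nil)
next
  case (Suc m)
  let ?O = "obs_space h"
  have "(\<Sum>ys | length ys = Suc m \<and> set ys \<subseteq> ?O. cond_law T Q h x ys)
      = (\<Sum>y\<in>?O. \<Sum>ys | length ys = m \<and> set ys \<subseteq> ?O. (\<Sum>z | h x z = y. Q z) * (\<Sum>x'\<in>UNIV. T x x' * cond_law T Q h x' ys))"
    by (simp add: sum_lists_Suc finite_obs cl_cons[OF st])
  also have "\<dots> = (\<Sum>y\<in>?O. (\<Sum>z | h x z = y. Q z) * (\<Sum>x'\<in>UNIV. T x x' * (\<Sum>ys | length ys = m \<and> set ys \<subseteq> ?O. cond_law T Q h x' ys)))"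
    by (simp add: sum_distrib_left sum.swap[of _ UNIV])
  also have "\<dots> = (\<Sum>y\<in>?O. (\<Sum>z | h x z = y. Q z))"
    using st by (simp add: Suc.IH stochastic_matrix_def)
  also have "\<dots> = 1" by (rule sum_A[OF pv])
  finally show ?case .
qed


lemma marg:
  fixes T :: "'x::finite \<Rightarrow> 'x \<Rightarrow> real" and Q :: "'z::finite \<Rightarrow> real" and h :: "'x \<Rightarrow> 'z \<Rightarrow> 'y"
  assumes st: "stochastic_matrix T" and pv: "prob_vector Q" and y: "y \<in> obs_space h"
  shows "j < N \<Longrightarrow> (\<Sum>ys | length ys = N \<and> set ys \<subseteq> obs_space h. (if ys ! j = y then cond_law T Q h x ys else 0))
     = (((*v) (trans_mat T) ^^ j) (A_col Q h y)) $ x"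
proof (induction j arbitrary: N x)
  case 0
  let ?O = "obs_space h"
  obtain m where N: "N = Suc m" using 0 by (cases N) auto
  have "(\<Sum>ys | length ys = N \<and> set ys \<subseteq> ?O. (if ys ! 0 = y then cond_law T Q h x ys else 0))
      = (\<Sum>y0\<in>?O. \<Sum>ys | length ys = m \<and> set ys \<subseteq> ?O. (if y0 = y then (\<Sum>z | h x z = y0. Q z) * (\<Sum>x'\<in>UNIV. T x x' * cond_law T Q h x' ys) else 0))"
    unfolding N sum_lists_Suc[OF finite_obs]
    by (intro sum.cong refl) (simp add: cl_cons[OF st])
  also have "\<dots> = (\<Sum>y0\<in>?O. (if y0 = y then (\<Sum>z | h x z = y0. Q z) * (\<Sum>x'\<in>UNIV. T x x' * (\<Sum>ys | length ys = m \<and> set ys \<subseteq> ?O. cond_law T Q h x' ys)) else 0))"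
    by (rule sum.cong[OF refl]) (simp add: sum_distrib_left sum.swap[of _ UNIV])
  also have "\<dots> = (\<Sum>y0\<in>?O. (if y0 = y then (\<Sum>z | h x z = y0. Q z) else 0))"
    using st by (simp add: total[OF st pv] stochastic_matrix_def cong: if_cong)
  also have "\<dots> = (\<Sum>z | h x z = y. Q z)"
    using y finite_obs[of h] by (simp add: sum.delta')
  finally show ?case by (simp add: A_col_def)
next
  case (Suc j)
  let ?O = "obs_space h"
  let ?M = "trans_mat T"
  let ?V = "((*v) ?M ^^ j) (A_col Q h y)"
  obtain m where N: "N = Suc m" using Suc by (cases N) auto
  have jm: "j < m" using Suc N by simp
  have "(\<Sum>ys | length ys = N \<and> set ys \<subseteq> ?O. (if ys ! Suc j = y then cond_law T Q h x ys else 0))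
      = (\<Sum>y0\<in>?O. \<Sum>ys | length ys = m \<and> set ys \<subseteq> ?O. (if ys ! j = y then (\<Sum>z | h x z = y0. Q z) * (\<Sum>x'\<in>UNIV. T x x' * cond_law T Q h x' ys) else 0))"
    unfolding N by (simp add: sum_lists_Suc finite_obs cl_cons[OF st] cong: if_cong)
  also have "\<dots> = (\<Sum>y0\<in>?O. \<Sum>ys | length ys = m \<and> set ys \<subseteq> ?O. (\<Sum>z | h x z = y0. Q z) * (\<Sum>x'\<in>UNIV. T x x' * (if ys ! j = y then cond_law T Q h x' ys else 0)))"
    by (rule sum.cong[OF refl], rule sum.cong[OF refl]) (simp add: if_distrib)
  also have "\<dots> = (\<Sum>y0\<in>?O. (\<Sum>z | h x z = y0. Q z) * (\<Sum>x'\<in>UNIV. T x x' * (\<Sum>ys | length ys = m \<and> set ys \<subseteq> ?O. (if ys ! j = y then cond_law T Q h x' ys else 0))))"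
    by (rule sum.cong[OF refl]) (simp add: sum_distrib_left sum.swap[of _ UNIV])
  also have "\<dots> = (\<Sum>y0\<in>?O. (\<Sum>z | h x z = y0. Q z) * (\<Sum>x'\<in>UNIV. T x x' * ?V $ x'))"
    using Suc.IH[OF jm] by simp
  also have "\<dots> = (\<Sum>y0\<in>?O. (\<Sum>z | h x z = y0. Q z)) * (\<Sum>x'\<in>UNIV. T x x' * ?V $ x')"
    by (simp add: sum_distrib_right)
  also have "\<dots> = (?M *v ?V) $ x"
    by (simp add: sum_A[OF pv] matrix_vector_mult_def trans_mat_def)
  finally show ?case by simp
qed


lemma part1:
  fixes T :: "'x::finite \<Rightarrow> 'x \<Rightarrow> real" and Q :: "'z::finite \<Rightarrow> real" and h :: "'x \<Rightarrow> 'z \<Rightarrow> 'y"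
  assumes st: "stochastic_matrix T" and pv: "prob_vector Q"
    and rk: "block_rank T Q h CARD('x) = CARD('x)"
  shows "observable T Q h CARD('x)"
proof -
  let ?n = "CARD('x)"
  let ?L = "{ys. length ys = ?n \<and> set ys \<subseteq> obs_space h}"
  define \<Phi> where "\<Phi> = (\<lambda>g :: 'y list \<Rightarrow> real. (\<chi> x. \<Sum>ys\<in>?L. g ys * cond_law T Q h x ys) :: real ^ 'x)"
  have sub: "subspace (range \<Phi>)"
    unfolding subspace_def
  proof (intro conjI ballI allI)
    have "0 = \<Phi> (\<lambda>_. 0)" by (simp add: \<Phi>_def vec_eq_iff)
    then show "0 \<in> range \<Phi>" by blast
  next
    fix u v assume "u \<in> range \<Phi>" "v \<in> range \<Phi>"
    then obtain g1 g2 where "u = \<Phi> g1" "v = \<Phi> g2" by blast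
    then have "u + v = \<Phi> (\<lambda>ys. g1 ys + g2 ys)"
      by (simp add: \<Phi>_def vec_eq_iff sum.distrib algebra_simps)
    then show "u + v \<in> range \<Phi>" by blast
  next
    fix c :: real and u assume "u \<in> range \<Phi>"
    then obtain g1 where "u = \<Phi> g1" by blast
    then have "c *\<^sub>R u = \<Phi> (\<lambda>ys. c * g1 ys)"
      by (simp add: \<Phi>_def vec_eq_iff sum_distrib_left algebra_simps)
    then show "c *\<^sub>R u \<in> range \<Phi>" by blast
  qed
  have "block_cols T Q h ?n \<subseteq> range \<Phi>"
  proof
    fix v assume "v \<in> block_cols T Q h ?n"
    then obtain j y where v: "v = ((*v) (trans_mat T) ^^ j) (A_col Q h y)" and j: "j < ?n" and y: "y \<in> obs_space h"
      unfolding block_cols_def by blast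
    have "\<Phi> (\<lambda>ys. if ys ! j = y then 1 else 0) $ x = v $ x" for x
    proof -
      have "\<Phi> (\<lambda>ys. if ys ! j = y then 1 else 0) $ x
          = (\<Sum>ys\<in>?L. (if ys ! j = y then 1 else 0) * cond_law T Q h x ys)"
        by (simp add: \<Phi>_def)
      also have "\<dots> = (\<Sum>ys\<in>?L. (if ys ! j = y then cond_law T Q h x ys else 0))"
        by (rule sum.cong) simp_all
      also have "\<dots> = v $ x" unfolding v by (rule marg[OF st pv y j])
      finally show ?thesis .
    qed
    then have "v = \<Phi> (\<lambda>ys. if ys ! j = y then 1 else 0)" by (simp add: vec_eq_iff)
    then show "v \<in> range \<Phi>" by blast
  qed
  then have "span (block_cols T Q h ?n) \<subseteq> range \<Phi>"
    by (rule span_minimal[OF _ sub])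
  moreover have "span (block_cols T Q h ?n) = UNIV"
    using rk unfolding block_rank_def by (simp add: dim_eq_full[symmetric])
  ultimately have full: "range \<Phi> = UNIV" by blast
  show ?thesis unfolding observable_def
  proof (intro allI impI)
    fix f :: "'x \<Rightarrow> real" and e :: real assume e: "e > 0"
    obtain g where g: "(\<chi> x. f x) = \<Phi> g" using full by (metis UNIV_I imageE)
    have "\<forall>x. f x = (\<Sum>ys\<in>?L. g ys * cond_law T Q h x ys)"
    proof
      fix x
      have "(\<chi> x. f x) $ x = \<Phi> g $ x" using g by simp
      then show "f x = (\<Sum>ys\<in>?L. g ys * cond_law T Q h x ys)" by (simp add: \<Phi>_def)
    qed
    then show "\<exists>g. \<forall>x. \<bar>f x - (\<Sum>ys | length ys = ?n \<and> set ys \<subseteq> obs_space h. g ys * cond_law T Q h x ys)\<bar> < e"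
      using e by (intro exI[of _ g]) simp
  qed
qed


lemma block_cols_Suc:
  "block_cols T Q h (Suc k) = block_cols T Q h 1 \<union> (\<lambda>v. trans_mat T *v v) ` block_cols T Q h k"
proof (rule set_eqI, rule iffI)
  fix v assume "v \<in> block_cols T Q h (Suc k)"
  then obtain j y where v: "v = ((*v) (trans_mat T) ^^ j) (A_col Q h y)" and j: "j < Suc k" and y: "y \<in> obs_space h"
    unfolding block_cols_def by blast
  show "v \<in> block_cols T Q h 1 \<union> (\<lambda>v. trans_mat T *v v) ` block_cols T Q h k"
  proof (cases j)
    case 0
    then show ?thesis using v y unfolding block_cols_def by auto
  next
    case (Suc j')
    then have "v = trans_mat T *v (((*v) (trans_mat T) ^^ j') (A_col Q h y))" using v by simp
    moreover have "((*v) (trans_mat T) ^^ j') (A_col Q h y) \<in> block_cols T Q h k"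
      using Suc j y unfolding block_cols_def by auto
    ultimately show ?thesis by blast
  qed
next
  fix v assume "v \<in> block_cols T Q h 1 \<union> (\<lambda>v. trans_mat T *v v) ` block_cols T Q h k"
  then show "v \<in> block_cols T Q h (Suc k)"
  proof
    assume "v \<in> block_cols T Q h 1"
    then show ?thesis unfolding block_cols_def by auto (metis funpow_0 zero_less_Suc)
  next
    assume "v \<in> (\<lambda>v. trans_mat T *v v) ` block_cols T Q h k"
    then obtain j y where v: "v = trans_mat T *v (((*v) (trans_mat T) ^^ j) (A_col Q h y))" and j: "j < k" and y: "y \<in> obs_space h"
      unfolding block_cols_def by blast
    then have "v = ((*v) (trans_mat T) ^^ Suc j) (A_col Q h y)" by simp
    moreover have "Suc j < Suc k" using j by simp
    ultimately show ?thesis using y unfolding block_cols_def by blast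
  qed
qed

lemma span_block_Suc:
  "span (block_cols T Q h (Suc k)) =
     {a + b | a b. a \<in> span (block_cols T Q h 1) \<and> b \<in> (\<lambda>v. trans_mat T *v v) ` span (block_cols T Q h k)}"
  unfolding block_cols_Suc span_Un span_linear_image[OF matrix_vector_mul_linear] by simp

lemma block_mono: "block_cols T Q h k \<subseteq> block_cols T Q h (Suc k)"
  unfolding block_cols_def by auto (metis less_SucI)

lemma stable:
  assumes "span (block_cols T Q h s) = span (block_cols T Q h (Suc s))"
  shows "span (block_cols T Q h (s + i)) = span (block_cols T Q h s)"
proof (induction i)
  case 0 then show ?case by simp
next
  case (Suc i)
  have "span (block_cols T Q h (s + Suc i)) = span (block_cols T Q h (Suc (s + i)))" by simp
  also have "\<dots> = span (block_cols T Q h (Suc s))"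
    unfolding span_block_Suc Suc.IH ..
  also have "\<dots> = span (block_cols T Q h s)" using assms by simp
  finally show ?case .
qed

lemma part2:
  fixes T :: "'x::finite \<Rightarrow> 'x \<Rightarrow> real" and Q :: "'z::finite \<Rightarrow> real" and h :: "'x \<Rightarrow> 'z \<Rightarrow> 'y"
  assumes k: "k \<ge> CARD('x)"
  shows "block_rank T Q h k = block_rank T Q h CARD('x)"
proof -
  let ?n = "CARD('x)"
  let ?B = "block_cols T Q h"
  have "\<exists>s\<le>?n. span (?B s) = span (?B (Suc s))"
  proof (rule ccontr)
    assume ne: "\<not> (\<exists>s\<le>?n. span (?B s) = span (?B (Suc s)))"
    have "s \<le> Suc ?n \<Longrightarrow> dim (?B s) \<ge> s" for s
    proof (induction s)
      case 0 then show ?case by simp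
    next
      case (Suc s)
      then have sn: "s \<le> ?n" by simp
      have "dim (?B (Suc s)) > dim (?B s)"
      proof (rule ccontr)
        assume "\<not> dim (?B (Suc s)) > dim (?B s)"
        then have "span (?B s) = span (?B (Suc s))"
          by (intro dim_eq_span block_mono) simp
        then show False using ne sn by blast
      qed
      then show ?case using Suc sn by simp
    qed
    from this[of "Suc ?n"] have "dim (?B (Suc ?n)) \<ge> Suc ?n" by simp
    moreover have "dim (?B (Suc ?n)) \<le> ?n" by (rule dim_subset_UNIV_cart)
    ultimately show False by simp
  qed
  then obtain s where s: "s \<le> ?n" "span (?B s) = span (?B (Suc s))" by blast
  have "span (?B k) = span (?B (s + (k - s)))" using s k by simp
  also have "\<dots> = span (?B s)" by (rule stable[OF s(2)])
  also have "\<dots> = span (?B (s + (?n - s)))" by (rule stable[OF s(2), symmetric])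
  also have "\<dots> = span (?B ?n)" using s by simp
  finally have "span (?B k) = span (?B ?n)" .
  then have "dim (span (?B k)) = dim (span (?B ?n))" by simp
  then show ?thesis unfolding block_rank_def by simp
qed

theorem lemma1:
  fixes T :: "'x::finite \<Rightarrow> 'x \<Rightarrow> real" and Q :: "'z::finite \<Rightarrow> real"
    and h :: "'x \<Rightarrow> 'z \<Rightarrow> 'y"
  assumes "stochastic_matrix T" and "prob_vector Q"
  shows "(block_rank T Q h CARD('x) = CARD('x) \<longrightarrow> observable T Q h CARD('x))
       \<and> (block_rank T Q h CARD('x) \<noteq> CARD('x) \<longrightarrow>
            (\<forall>k\<ge>CARD('x). block_rank T Q h k = block_rank T Q h CARD('x)))"
  using part1[OF assms] part2 by blast

end
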